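(* Let $\psi(x)=(x-\lfloor x\rfloor)-(x-\lfloor x\rfloor)^2$ for $x\geq0$. Then (i) $\lim_{n\to\infty}\frac{1}{\log n}\int_0^{n/2}\frac{\psi(x)}{x(1-x/n)}dx=\frac16$; (ii) $\lim_{n\to\infty}\frac{1}{(\log n)^2}\int_0^{n/2}\frac{\psi(x)\log((x/n)^{-1}-1)}{x(1-x/n)(1-2x/n)}dx=\frac1{12}$. *)

theory Defs
  imports "HOL-Analysis.Analysis"
begin

definition psi :: "real \<Rightarrow> real" where
  "psi x = (x - of_int \<lfloor>x\<rfloor>) - (x - of_int \<lfloor>x\<rfloor>)^2"

end

theory Submission
  imports Defs "HOL-Real_Asymp.Real_Asymp"
begin


lemma per_cont:
  fixes h :: "real \<Rightarrow> real"
  assumes hc: "continuous_on UNIV h" and h01: "h 0 = h 1"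
  shows "isCont (\<lambda>x. h (x - of_int \<lfloor>x\<rfloor>)) x"
proof -
  define k where "k = \<lfloor>x\<rfloor>"
  have kx: "of_int k \<le> x" "x < of_int k + 1" unfolding k_def by linarith+
  have cc: "((\<lambda>y. h (y - c)) \<longlongrightarrow> h (x - c)) (at x)" for c
  proof -
    have "isCont (\<lambda>y. h (y - c)) x"
    proof -
      have h1: "isCont h (x - c)" using hc by (simp add: continuous_on_eq_continuous_at)
      have "isCont (\<lambda>y. y - c) x" by (intro continuous_intros)
      from isCont_o2[OF this h1] show ?thesis .
    qed
    then show ?thesis by (simp add: isCont_def)
  qed
  have R: "((\<lambda>y. h (y - of_int \<lfloor>y\<rfloor>)) \<longlongrightarrow> h (x - of_int k)) (at_right x)"
  proof -
    have ev: "eventually (\<lambda>y. h (y - of_int k) = h (y - of_int \<lfloor>y\<rfloor>)) (at_right x)"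
    proof (rule eventually_at_rightI[of x "of_int k + 1"])
      fix y assume "y \<in> {x<..<of_int k + 1}"
      with kx have "\<lfloor>y\<rfloor> = k" by (simp add: floor_eq_iff)
      then show "h (y - of_int k) = h (y - of_int \<lfloor>y\<rfloor>)" by simp
    qed (use kx in auto)
    have "((\<lambda>y. h (y - of_int k)) \<longlongrightarrow> h (x - of_int k)) (at_right x)"
      using cc[of "of_int k"] by (simp add: filterlim_at_split)
    then show ?thesis using ev by (rule Lim_transform_eventually)
  qed
  have L: "((\<lambda>y. h (y - of_int \<lfloor>y\<rfloor>)) \<longlongrightarrow> h (x - of_int k)) (at_left x)"
  proof (cases "x = of_int k")
    case True
    have ev: "eventually (\<lambda>y. h (y - of_int (k - 1)) = h (y - of_int \<lfloor>y\<rfloor>)) (at_left x)"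
    proof (rule eventually_at_leftI[of "of_int k - 1" x])
      fix y assume "y \<in> {of_int k - 1<..<x}"
      with True have "\<lfloor>y\<rfloor> = k - 1" by (simp add: floor_eq_iff)
      then show "h (y - of_int (k - 1)) = h (y - of_int \<lfloor>y\<rfloor>)" by simp
    qed (use True in auto)
    have "((\<lambda>y. h (y - of_int (k - 1))) \<longlongrightarrow> h (x - of_int (k - 1))) (at_left x)"
      using cc[of "of_int (k - 1)"] by (simp add: filterlim_at_split)
    moreover have "h (x - of_int (k - 1)) = h (x - of_int k)" using True h01 by simp
    ultimately have "((\<lambda>y. h (y - of_int (k - 1))) \<longlongrightarrow> h (x - of_int k)) (at_left x)" by simp
    then show ?thesis using ev by (rule Lim_transform_eventually)
  next
    case False
    with kx have kx2: "of_int k < x" by simp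
    have ev: "eventually (\<lambda>y. h (y - of_int k) = h (y - of_int \<lfloor>y\<rfloor>)) (at_left x)"
    proof (rule eventually_at_leftI[of "of_int k" x])
      fix y assume "y \<in> {of_int k<..<x}"
      with kx have "\<lfloor>y\<rfloor> = k" by (simp add: floor_eq_iff)
      then show "h (y - of_int k) = h (y - of_int \<lfloor>y\<rfloor>)" by simp
    qed (use kx2 in auto)
    have "((\<lambda>y. h (y - of_int k)) \<longlongrightarrow> h (x - of_int k)) (at_left x)"
      using cc[of "of_int k"] by (simp add: filterlim_at_split)
    then show ?thesis using ev by (rule Lim_transform_eventually)
  qed
  have "((\<lambda>y. h (y - of_int \<lfloor>y\<rfloor>)) \<longlongrightarrow> h (x - of_int k)) (at x)"
    using L R by (rule filterlim_split_at)
  then show ?thesis by (simp add: isCont_def k_def)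
qed

lemma psi_cont: "isCont psi x"
proof -
  have "isCont (\<lambda>x. (\<lambda>u. u - u^2) (x - of_int \<lfloor>x\<rfloor>)) x"
    by (rule per_cont) (auto intro!: continuous_intros)
  then show ?thesis unfolding psi_def[abs_def] by simp
qed

lemma psi_cont_on[continuous_intros]: "continuous_on S g \<Longrightarrow> continuous_on S (\<lambda>x. psi (g x))"
  using psi_cont by (metis continuous_at_imp_continuous_on continuous_on_compose2 subset_UNIV)

definition PP :: "real \<Rightarrow> real" where
  "PP x = (\<lambda>u. u^2/2 - u^3/3 - u/6) (x - of_int \<lfloor>x\<rfloor>)"

lemma PP_cont: "isCont PP x"
  unfolding PP_def[abs_def] by (rule per_cont) (auto intro!: continuous_intros)

lemma PP_bound: "\<bar>PP x\<bar> \<le> 1"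
proof -
  define u where "u = x - of_int \<lfloor>x\<rfloor>"
  have u: "0 \<le> u" "u \<le> 1" unfolding u_def by linarith+
  have e: "u^2/2 - u^3/3 - u/6 = u * (1 - u) * (2*u - 1) / 6" by (simp add: field_simps power2_eq_square power3_eq_cube)
  have "\<bar>u * (1 - u) * (2*u - 1)\<bar> \<le> 1 * 1 * 1"
    unfolding abs_mult using u by (intro mult_mono) auto
  then show ?thesis unfolding PP_def u_def[symmetric] e by simp
qed

lemma psi_bound: "\<bar>psi x\<bar> \<le> 1" "0 \<le> psi x"
proof -
  define u where "u = x - of_int \<lfloor>x\<rfloor>"
  have u: "0 \<le> u" "u \<le> 1" unfolding u_def by linarith+
  have "psi x = u * (1 - u)" unfolding psi_def u_def[symmetric] by (simp add: algebra_simps power2_eq_square)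
  moreover have "u * (1 - u) \<le> 1 * 1" using u by (intro mult_mono) auto
  moreover have "0 \<le> u * (1 - u)" using u by simp
  ultimately show "\<bar>psi x\<bar> \<le> 1" "0 \<le> psi x" by auto
qed

lemma PP_deriv:
  assumes "x \<notin> \<int>"
  shows "(PP has_real_derivative (psi x - 1/6)) (at x)"
proof -
  define k where "k = \<lfloor>x\<rfloor>"
  have kx: "of_int k < x" "x < of_int k + 1" unfolding k_def using assms
    apply (metis Ints_of_int floor_less_iff less_eq_real_def linorder_not_less of_int_floor_le)
    by linarith
  have d: "((\<lambda>y. (y - of_int k)^2/2 - (y - of_int k)^3/3 - (y - of_int k)/6) has_real_derivative
        ((x - of_int k) - (x - of_int k)^2 - 1/6)) (at x)"
    by (auto intro!: derivative_eq_intros simp: field_simps power2_eq_square)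
  have "(PP has_real_derivative ((x - of_int k) - (x - of_int k)^2 - 1/6)) (at x)"
  proof (rule has_field_derivative_transform_within_open[OF d, of "{of_int k<..<of_int k + 1}"])
    fix y assume "y \<in> {of_int k<..<of_int k + 1 :: real}"
    then have "\<lfloor>y\<rfloor> = k" by (simp add: floor_eq_iff)
    then show "(y - of_int k)^2/2 - (y - of_int k)^3/3 - (y - of_int k)/6 = PP y"
      by (simp add: PP_def)
  qed (use kx in auto)
  then show ?thesis by (simp add: psi_def k_def)
qed

lemma ftc:
  assumes "a \<le> b" "\<And>x. x \<in> {a..b} \<Longrightarrow> (F has_real_derivative f x) (at x)"
  shows "(f has_integral (F b - F a)) {a..b}"
proof (rule fundamental_theorem_of_calculus[OF assms(1)])
  fix x assume "x \<in> {a..b}"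
  then show "(F has_vector_derivative f x) (at x within {a..b})"
    using assms(2) has_field_derivative_at_within has_real_derivative_iff_has_vector_derivative by blast
qed

lemma ibp:
  assumes ab: "a \<le> b" and df: "\<And>x. x \<in> {a..b} \<Longrightarrow> (f has_real_derivative f' x) (at x)"
    and cf': "continuous_on {a..b} f'" and G: "(G has_integral V) {a..b}"
    and fG: "\<And>x. x \<in> {a..b} \<Longrightarrow> \<bar>f' x\<bar> \<le> G x"
  shows "\<bar>integral {a..b} (\<lambda>x. psi x * f x) - integral {a..b} f / 6\<bar> \<le> \<bar>f a\<bar> + \<bar>f b\<bar> + V"
proof -
  have cf: "continuous_on {a..b} f"
    using df by (meson DERIV_isCont continuous_at_imp_continuous_on)
  have cP: "continuous_on S PP" for S
    using PP_cont by (meson continuous_at_imp_continuous_on)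
  define S where "S = (of_int ` {\<lfloor>a\<rfloor>..\<lceil>b\<rceil>} :: real set)"
  have fin: "finite S" unfolding S_def by simp
  have D: "((\<lambda>x. PP x * f x) has_vector_derivative ((psi x - 1/6) * f x + PP x * f' x)) (at x)"
    if x: "x \<in> {a<..<b} - S" for x
  proof -
    have nz: "x \<notin> \<int>"
    proof
      assume "x \<in> \<int>"
      then obtain m where m: "x = of_int m" by (auto elim: Ints_cases)
      with x have "\<lfloor>a\<rfloor> \<le> m" "m \<le> \<lceil>b\<rceil>"
        by (auto simp: floor_le_iff le_ceiling_iff)
      with m x show False unfolding S_def by auto
    qed
    have "((\<lambda>x. PP x * f x) has_real_derivative ((psi x - 1/6) * f x + f' x * PP x)) (at x)"
      using DERIV_mult[OF PP_deriv[OF nz] df[of x]] x by simp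
    then show ?thesis
      by (simp add: has_real_derivative_iff_has_vector_derivative mult.commute)
  qed
  have H: "((\<lambda>x. (psi x - 1/6) * f x + PP x * f' x) has_integral (PP b * f b - PP a * f a)) {a..b}"
    by (rule fundamental_theorem_of_calculus_interior_strong[OF fin ab D])
       (auto intro!: continuous_intros cP cf)
  have i1: "(\<lambda>x. psi x * f x) integrable_on {a..b}"
    by (intro integrable_continuous_interval continuous_intros cf)
  have i0: "f integrable_on {a..b}"
    by (intro integrable_continuous_interval cf)
  have i2: "(\<lambda>x. PP x * f' x) integrable_on {a..b}"
    by (intro integrable_continuous_interval continuous_intros cP cf')
  have i3: "(\<lambda>x. (psi x - 1/6) * f x) integrable_on {a..b}"
    by (intro integrable_continuous_interval continuous_intros cf)
  have "integral {a..b} (\<lambda>x. (psi x - 1/6) * f x + PP x * f' x) = PP b * f b - PP a * f a"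
    using H by (rule integral_unique)
  then have E: "integral {a..b} (\<lambda>x. (psi x - 1/6) * f x) + integral {a..b} (\<lambda>x. PP x * f' x) = PP b * f b - PP a * f a"
    using i2 i3 by (simp add: integral_add)
  have "integral {a..b} (\<lambda>x. (psi x - 1/6) * f x) = integral {a..b} (\<lambda>x. psi x * f x - f x / 6)"
    by (simp add: algebra_simps)
  also have "\<dots> = integral {a..b} (\<lambda>x. psi x * f x) - integral {a..b} f / 6"
    using i1 i0 by (simp add: integral_diff integral_divide)
  finally have E2: "integral {a..b} (\<lambda>x. (psi x - 1/6) * f x) = integral {a..b} (\<lambda>x. psi x * f x) - integral {a..b} f / 6" .
  have "norm (integral {a..b} (\<lambda>x. PP x * f' x)) \<le> integral {a..b} G"
  proof (rule integral_norm_bound_integral[OF i2])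
    show "G integrable_on {a..b}" using G by blast
    fix x assume "x \<in> {a..b}"
    then have "\<bar>PP x\<bar> * \<bar>f' x\<bar> \<le> 1 * G x"
      using fG PP_bound by (intro mult_mono) auto
    then show "norm (PP x * f' x) \<le> G x" by (simp add: abs_mult)
  qed
  then have B2: "\<bar>integral {a..b} (\<lambda>x. PP x * f' x)\<bar> \<le> V" using G integral_unique by auto
  have "\<bar>PP b * f b\<bar> \<le> \<bar>f b\<bar>" "\<bar>PP a * f a\<bar> \<le> \<bar>f a\<bar>"
    using PP_bound[of a] PP_bound[of b] by (auto simp: abs_mult intro: mult_left_le_one_le mult_right_le_one_le)
  then show ?thesis using E E2 B2 by linarith
qed

lemma dom_int:
  fixes h g :: "real \<Rightarrow> real"
  assumes hc: "continuous_on {a<..<b} h" and g: "(g has_integral V) {a..b}"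
    and hg: "\<And>x. x \<in> {a<..<b} \<Longrightarrow> \<bar>h x\<bar> \<le> g x"
  shows "h integrable_on {a..b}" "\<bar>integral {a..b} h\<bar> \<le> V"
proof -
  have gi: "g integrable_on {a<..<b}" using g integrable_on_open_interval_real by blast
  have hm: "h \<in> borel_measurable (lebesgue_on {a<..<b})"
    by (rule continuous_imp_measurable_on_sets_lebesgue[OF hc]) auto
  have hi: "h integrable_on {a<..<b}"
    by (rule measurable_bounded_by_integrable_imp_integrable_real[OF hm gi hg]) auto
  then show "h integrable_on {a..b}" using integrable_on_open_interval_real by blast
  have "norm (integral {a<..<b} h) \<le> integral {a<..<b} g"
    by (rule integral_norm_bound_integral[OF hi gi]) (use hg in auto)
  moreover have "integral {a<..<b} g = V"
    using g integral_open_interval_real integral_unique by metis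
  ultimately show "\<bar>integral {a..b} h\<bar> \<le> V"
    by (simp add: integral_open_interval_real[symmetric])
qed

lemma psi_01: "0 < x \<Longrightarrow> x < 1 \<Longrightarrow> psi x = x - x^2"
proof -
  assume "0 < x" "x < 1"
  then have "\<lfloor>x\<rfloor> = 0" by (simp add: floor_eq_iff)
  then show ?thesis unfolding psi_def by simp
qed

lemma part1_est:
  fixes N :: real
  assumes N: "N \<ge> 4"
  shows "\<bar>integral {0..N/2} (\<lambda>x. psi x / (x * (1 - x / N))) - ln (N - 1) / 6\<bar> \<le> 7"
proof -
  define h where "h = (\<lambda>x. psi x / (x * (1 - x / N)))"
  have c2: "((\<lambda>x::real. 2) has_integral (2::real)) {0..1}"
    using ftc[of 0 1 "\<lambda>x. 2 * x" "\<lambda>x. 2"] by (auto intro!: derivative_eq_intros)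
  have hc0: "continuous_on {0<..<1} h"
    unfolding h_def using N by (intro continuous_intros) (auto simp: field_simps)
  have hb0: "\<bar>h x\<bar> \<le> 2" if x: "x \<in> {0<..<1}" for x
  proof -
    have p: "psi x = x - x^2" using psi_01 x by auto
    have "h x = (1 - x) / (1 - x / N)"
      using x N unfolding h_def p by (auto simp: field_simps power2_eq_square)
    moreover have "(1 - x) / (1 - x / N) \<le> 2" using x N 
      by (auto simp: field_simps) (smt (verit) mult_nonneg_nonneg)
    moreover have "0 \<le> (1 - x) / (1 - x / N)" using x N by (auto simp: field_simps)
    ultimately show ?thesis by linarith
  qed
  have A: "h integrable_on {0..1}" "\<bar>integral {0..1} h\<bar> \<le> 2"
    using dom_int[OF hc0 c2 hb0] by auto
  define f where "f = (\<lambda>x. 1 / x + 1 / (N - x))"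
  define f' where "f' = (\<lambda>x. - 1 / x^2 + 1 / (N - x)^2)"
  have df: "(f has_real_derivative f' x) (at x)" if "x \<in> {1..N/2}" for x
    unfolding f_def f'_def using that N
    by (auto intro!: derivative_eq_intros simp: field_simps power2_eq_square)
  have cf': "continuous_on {1..N/2} f'"
    unfolding f'_def using N by (intro continuous_intros) auto
  have G: "((\<lambda>x. 2 / x^2) has_integral (2 - 4 / N)) {1..N/2}"
  proof -
    have "((\<lambda>x. 2 / x^2) has_integral ((- 2 / (N/2)) - (- 2 / 1))) {1..N/2}"
      using N by (intro ftc) (auto intro!: derivative_eq_intros simp: field_simps power2_eq_square)
    then show ?thesis by simp
  qed
  have fG: "\<bar>f' x\<bar> \<le> 2 / x^2" if x: "x \<in> {1..N/2}" for x
  proof -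
    have "x^2 \<le> (N - x)^2" using x by (intro power_mono) auto
    then have "1 / (N - x)^2 \<le> 1 / x^2" using x by (intro divide_left_mono) auto
    moreover have "0 \<le> 1 / (N - x)^2" by simp
    moreover have "0 \<le> 1 / x^2" by simp
    moreover have "f' x = 1 / (N - x)^2 - 1 / x^2" "2 / x^2 = 2 * (1 / x^2)" unfolding f'_def by simp_all
    ultimately show ?thesis by (simp only: abs_le_iff) linarith
  qed
  have B0: "\<bar>integral {1..N/2} (\<lambda>x. psi x * f x) - integral {1..N/2} f / 6\<bar> \<le> \<bar>f 1\<bar> + \<bar>f (N/2)\<bar> + (2 - 4/N)"
    using ibp[OF _ df cf' G fG] N by simp
  have intf: "(f has_integral (ln (N - 1))) {1..N/2}"
  proof -
    have "(f has_integral ((ln (N/2) - ln (N - N/2)) - (ln 1 - ln (N - 1)))) {1..N/2}"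
      unfolding f_def using N by (intro ftc) (auto intro!: derivative_eq_intros simp: field_simps)
    then show ?thesis by simp
  qed
  have f1: "\<bar>f 1\<bar> \<le> 2" "\<bar>f (N/2)\<bar> \<le> 1" unfolding f_def using N by (auto simp: field_simps)
  have hf: "h x = psi x * f x" if "x \<in> {1..N/2}" for x
    unfolding h_def f_def using that N by (auto simp: field_simps)
  have i1: "(\<lambda>x. psi x * f x) integrable_on {1..N/2}"
    unfolding f_def using N by (intro integrable_continuous_interval continuous_intros) auto
  have hB: "(h has_integral integral {1..N/2} (\<lambda>x. psi x * f x)) {1..N/2}"
    by (rule has_integral_spike_finite[of "{}"]) (use hf i1 in auto)
  have hA: "(h has_integral integral {0..1} h) {0..1}" using A by auto
  have "(h has_integral (integral {0..1} h + integral {1..N/2} (\<lambda>x. psi x * f x))) {0..N/2}"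
    by (rule has_integral_combine[OF _ _ hA hB]) (use N in auto)
  then have "integral {0..N/2} h = integral {0..1} h + integral {1..N/2} (\<lambda>x. psi x * f x)"
    by (rule integral_unique)
  moreover have "integral {1..N/2} f = ln (N - 1)" using intf by (rule integral_unique)
  ultimately show ?thesis using A(2) B0 f1 N unfolding h_def[symmetric]
    by (smt (verit) divide_nonneg_nonneg)
qed

lemma hform:
  fixes N x :: real
  assumes "0 < x" "x < N / 2"
  shows "psi x * ln (inverse (x / N) - 1) / (x * (1 - x / N) * (1 - 2 * x / N))
       = psi x * (ln (N - x) - ln x) * (1 / x + (4 / (N - 2 * x) - 1 / (N - x)))"
proof -
  have "inverse (x / N) - 1 = (N - x) / x" using assms by (simp add: field_simps)
  then have l: "ln (inverse (x / N) - 1) = ln (N - x) - ln x" using assms by (simp add: ln_div)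
  have d: "1 / (x * (1 - x / N) * (1 - 2 * x / N)) = 1 / x + (4 / (N - 2 * x) - 1 / (N - x))"
  proof -
    have p: "N > 0" "N - x > 0" "N - 2 * x > 0" "1 - x / N > 0" "1 - 2 * x / N > 0" using assms by (auto simp: field_simps)
    then have "x * (1 - x / N) * (1 - 2 * x / N) = x * (N - x) * (N - 2 * x) / N^2"
      by (simp add: field_simps power2_eq_square)
    moreover define y where "y = N - x"
    moreover define z where "z = N - 2 * x"
    ultimately have e: "x * (1 - x / N) * (1 - 2 * x / N) = x * y * z / N^2" and nz: "y \<noteq> 0" "z \<noteq> 0" "x \<noteq> 0" "N \<noteq> 0"
      using p assms by auto
    have "1 / (x * y * z / N^2) = 1 / x + (4 / z - 1 / y)"
      using nz apply (simp add: field_simps)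
      by (simp add: y_def z_def algebra_simps power2_eq_square)
    then show ?thesis unfolding e y_def z_def .
  qed
  have "psi x * ln (inverse (x / N) - 1) / (x * (1 - x / N) * (1 - 2 * x / N))
     = psi x * ln (inverse (x / N) - 1) * (1 / (x * (1 - x / N) * (1 - 2 * x / N)))" by simp
  then show ?thesis unfolding l d .
qed

definition h2 :: "real \<Rightarrow> real \<Rightarrow> real" where
  "h2 N x = psi x * ln (inverse (x / N) - 1) / (x * (1 - x / N) * (1 - 2 * x / N))"

lemma h2_cont:
  assumes "0 \<le> a" "b \<le> N / 2"
  shows "continuous_on {a<..<b} (h2 N)"
proof -
  have "continuous_on {a<..<b} (\<lambda>x. psi x * (ln (N - x) - ln x) * (1 / x + (4 / (N - 2 * x) - 1 / (N - x))))"
    using assms by (intro continuous_intros) (auto simp: field_simps)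
  then show ?thesis
    by (rule continuous_on_eq) (use assms hform in \<open>auto simp: h2_def\<close>)
qed

lemma const_int: "a \<le> b \<Longrightarrow> ((\<lambda>x::real. c) has_integral (c * b - c * a)) {a..b}"
  by (rule ftc) (auto intro!: derivative_eq_intros)

lemma p2A:
  assumes N: "N \<ge> 8"
  shows "h2 N integrable_on {0..1}" "\<bar>integral {0..1} (h2 N)\<bar> \<le> 2 * ln N + 8"
proof -
  define g where "g = (\<lambda>x. 2 * ln N + 4 / sqrt x)"
  have gi: "(g has_integral (2 * ln N + 8)) {0..1}"
  proof -
    have "(g has_integral ((2 * ln N * 1 + 8 * sqrt 1) - (2 * ln N * 0 + 8 * sqrt 0))) {0..1}"
    proof (rule fundamental_theorem_of_calculus_interior)
      show "continuous_on {0..1} (\<lambda>x. 2 * ln N * x + 8 * sqrt x)" by (intro continuous_intros)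
      fix x :: real assume x: "x \<in> {0<..<1}"
      have "((\<lambda>x. 2 * ln N * x + 8 * sqrt x) has_real_derivative (2 * ln N + 8 * (inverse (sqrt x) / 2))) (at x)"
        using x by (auto intro!: derivative_eq_intros DERIV_real_sqrt)
      moreover have "2 * ln N + 8 * (inverse (sqrt x) / 2) = g x" unfolding g_def by (simp add: field_simps)
      ultimately show "((\<lambda>x. 2 * ln N * x + 8 * sqrt x) has_vector_derivative g x) (at x)"
        by (simp add: has_real_derivative_iff_has_vector_derivative)
    qed simp
    then show ?thesis by simp
  qed
  have hb: "\<bar>h2 N x\<bar> \<le> g x" if x: "x \<in> {0<..<1}" for x
  proof -
    have x0: "0 < x" "x < 1" using x by auto
    have p: "psi x = x - x^2" using psi_01 x by auto
    define Q where "Q = (1 - x / N) * (1 - 2 * x / N)"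
    have Q: "Q \<ge> 1/2" unfolding Q_def
    proof -
      have "1 - x / N \<ge> 3/4" "1 - 2 * x / N \<ge> 3/4" using x0 N by (auto simp: field_simps)
      then have "(1 - x / N) * (1 - 2 * x / N) \<ge> (3/4) * (3/4)" by (intro mult_mono) auto
      then show "(1 - x / N) * (1 - 2 * x / N) \<ge> 1/2" by linarith
    qed
    define L where "L = ln (inverse (x / N) - 1)"
    have e0: "h2 N x = (x - x^2) * L / (x * Q)" unfolding h2_def L_def Q_def p
      by (simp add: mult.assoc)
    have gen: "(x - x^2) * L / (x * Q) = (1 - x) * L / Q" if "x \<noteq> 0" "Q \<noteq> 0" for x L Q :: real
      using that by (simp add: field_simps power2_eq_square)
    have e: "h2 N x = (1 - x) * L / Q" unfolding e0 using x0 Q by (intro gen) auto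
    have iv: "inverse (x / N) - 1 = N / x - 1" by (simp add: field_simps)
    have "N / x \<ge> N" using x0 N by (simp add: field_simps)
    then have L0: "L \<ge> 0" unfolding L_def iv using N by simp
    have "L \<le> ln (N / x)" unfolding L_def iv using N x0 by (subst ln_le_cancel_iff) auto
    also have "\<dots> = ln N - ln x" using N x0 by (simp add: ln_div)
    finally have L1: "L \<le> ln N - ln x" .
    have "ln (1 / sqrt x) \<le> 1 / sqrt x - 1" using x0 by (intro ln_le_minus_one) auto
    moreover have "ln (1 / sqrt x) = - ln x / 2" using x0 by (simp add: ln_div ln_sqrt)
    ultimately have "- ln x / 2 \<le> 1 / sqrt x - 1" by simp
    moreover have "2 * (1 / sqrt x) = 2 / sqrt x" by simp
    ultimately have lx: "- ln x \<le> 2 / sqrt x" by linarith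
    have "(1 - x) * L / Q \<le> 1 * L / (1/2)"
      using Q L0 x0 by (intro divide_mono mult_right_mono) auto
    moreover have "0 \<le> (1 - x) * L / Q" using Q L0 x0 by auto
    ultimately show ?thesis unfolding e g_def using L1 lx by simp
  qed
  show "h2 N integrable_on {0..1}" "\<bar>integral {0..1} (h2 N)\<bar> \<le> 2 * ln N + 8"
    using dom_int[OF h2_cont gi hb] N by auto
qed

lemma p2C:
  assumes N: "N \<ge> 8"
  shows "h2 N integrable_on {N/4..N/2}" "\<bar>integral {N/4..N/2} (h2 N)\<bar> \<le> 8"
proof -
  have gi: "((\<lambda>x. 32 / N) has_integral 8) {N/4..N/2}"
    using const_int[of "N/4" "N/2" "32 / N"] N by (simp add: field_simps)
  have hb: "\<bar>h2 N x\<bar> \<le> 32 / N" if x: "x \<in> {N/4<..<N/2}" for x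
  proof -
    have x0: "N/4 < x" "x < N/2" "0 < x" "0 < N - 2 * x" "0 < N - x" using x N by auto
    define L where "L = ln (inverse (x / N) - 1)"
    have iv: "inverse (x / N) - 1 = (N - x) / x" using x0 by (simp add: field_simps)
    have L0: "L \<ge> 0" unfolding L_def iv using x0 by (simp add: field_simps)
    have "L \<le> (N - x) / x - 1" unfolding L_def iv using x0 by (intro ln_le_minus_one) auto
    also have "\<dots> = (N - 2 * x) / x" using x0 by (simp add: field_simps)
    finally have L1: "L \<le> (N - 2 * x) / x" .
    have e: "h2 N x = psi x * L * (N^2 / (x * (N - x) * (N - 2 * x)))"
      unfolding h2_def L_def using x0 N by (simp add: field_simps power2_eq_square)
    have D0: "0 \<le> N^2 / (x * (N - x) * (N - 2 * x))" using x0 by simp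
    have "psi x * L * (N^2 / (x * (N - x) * (N - 2 * x))) \<le> 1 * ((N - 2 * x) / x) * (N^2 / (x * (N - x) * (N - 2 * x)))"
      using psi_bound[of x] L0 L1 D0 by (intro mult_right_mono mult_mono) auto
    also have "\<dots> = N^2 / (x * x * (N - x))"
    proof -
      have gen: "z / x * (M / (x * y * z)) = M / (x * x * y)" if "z \<noteq> 0" "x \<noteq> 0" "y \<noteq> 0" for x y z M :: real
        using that by (simp add: field_simps)
      show ?thesis unfolding mult_1_left by (rule gen) (use x0 in auto)
    qed
    also have "\<dots> \<le> N^2 / ((N/4) * (N/4) * (N/2))"
      using x0 N by (intro divide_left_mono mult_mono mult_pos_pos) auto
    also have "\<dots> = 32 / N" using N by (simp add: field_simps power2_eq_square)
    finally have "h2 N x \<le> 32 / N" unfolding e .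
    moreover have "0 \<le> h2 N x" unfolding e using psi_bound[of x] L0 D0 by (intro mult_nonneg_nonneg) auto
    ultimately show ?thesis by simp
  qed
  show "h2 N integrable_on {N/4..N/2}" "\<bar>integral {N/4..N/2} (h2 N)\<bar> \<le> 8"
    using dom_int[OF h2_cont gi hb] N by auto
qed

lemma p2B:
  assumes N: "N \<ge> 8"
  shows "h2 N integrable_on {1..N/4}"
    "ln (3 * N / 4) * ln (N / 4) / 6 - (ln (N / 4))^2 / 12 - (5 * ln N + 4) \<le> integral {1..N/4} (h2 N)"
    "integral {1..N/4} (h2 N) \<le> ln N * ln (N / 4) / 6 - (ln (N / 4))^2 / 12 + (5 * ln N + 4)"
proof -
  define b where "b = N / 4"
  have b: "b \<ge> 2" "N - b \<ge> 3 * N / 4" "b \<le> N / 2" using N unfolding b_def by auto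
  have lnN: "ln N \<ge> 0" using N by simp
  define f1 where "f1 = (\<lambda>x. ln (N - x) / x)"
  define f1' where "f1' = (\<lambda>x. - 1 / ((N - x) * x) - ln (N - x) / x^2)"
  define g where "g = (\<lambda>x::real. ln x / x)"
  define g' where "g' = (\<lambda>x::real. (1 - ln x) / x^2)"
  define r where "r = (\<lambda>x. psi x * ((ln (N - x) - ln x) * (4 / (N - 2 * x) - 1 / (N - x))))"
  have df1: "(f1 has_real_derivative f1' x) (at x)" if "x \<in> {1..b}" for x
    unfolding f1_def f1'_def using that b
    by (auto intro!: derivative_eq_intros simp: field_simps power2_eq_square)
  have cf1': "continuous_on {1..b} f1'"
    unfolding f1'_def using b by (intro continuous_intros) auto
  have G1: "((\<lambda>x. (1 + ln N) / x^2) has_integral ((1 + ln N) - (1 + ln N) / b)) {1..b}"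
  proof -
    have "((\<lambda>x. (1 + ln N) / x^2) has_integral ((- (1 + ln N) / b) - (- (1 + ln N) / 1))) {1..b}"
      using b by (intro ftc) (auto intro!: derivative_eq_intros simp: field_simps power2_eq_square)
    moreover have "(- (1 + ln N) / b) - (- (1 + ln N) / 1) = (1 + ln N) - (1 + ln N) / b"
      by (simp add: minus_divide_left)
    ultimately show ?thesis by metis
  qed
  have f1G: "\<bar>f1' x\<bar> \<le> (1 + ln N) / x^2" if x: "x \<in> {1..b}" for x
  proof -
    have x0: "1 \<le> x" "x \<le> b" using x by auto
    have "x * x \<le> (N - x) * x" using x0 b by (intro mult_right_mono) auto
    then have a1: "1 / ((N - x) * x) \<le> 1 / x^2" using x0 b by (intro divide_left_mono) (auto simp: power2_eq_square)
    have a0: "0 \<le> 1 / ((N - x) * x)" using x0 b by auto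
    have l0: "0 \<le> ln (N - x)" "ln (N - x) \<le> ln N" using x0 b by auto
    have a2: "ln (N - x) / x^2 \<le> ln N / x^2" using l0 by (intro divide_right_mono) auto
    have a3: "0 \<le> ln (N - x) / x^2" using l0 by auto
    have e: "(1 + ln N) / x^2 = 1 / x^2 + ln N / x^2" by (simp add: add_divide_distrib)
    have "f1' x = - (1 / ((N - x) * x)) - ln (N - x) / x^2" unfolding f1'_def by simp
    then show ?thesis unfolding e using a0 a1 a2 a3 by (simp only: abs_le_iff) linarith
  qed
  have E1: "\<bar>integral {1..b} (\<lambda>x. psi x * f1 x) - integral {1..b} f1 / 6\<bar> \<le> \<bar>f1 1\<bar> + \<bar>f1 b\<bar> + ((1 + ln N) - (1 + ln N) / b)"
    using ibp[OF _ df1 cf1' G1 f1G] b by simp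
  have f1b: "\<bar>f1 1\<bar> \<le> ln N" "\<bar>f1 b\<bar> \<le> ln N"
  proof -
    have "0 \<le> ln (N - 1)" "ln (N - 1) \<le> ln N" using N by auto
    then show "\<bar>f1 1\<bar> \<le> ln N" unfolding f1_def by simp
    have l: "0 \<le> ln (N - b)" "ln (N - b) \<le> ln N" using N b by auto
    then have "ln (N - b) / b \<le> ln (N - b) / 1" using b by (intro divide_left_mono) auto
    moreover have "0 \<le> ln (N - b) / b" using l b by simp
    ultimately show "\<bar>f1 b\<bar> \<le> ln N" unfolding f1_def using l by (simp only: abs_of_nonneg)
  qed
  have V1: "(1 + ln N) - (1 + ln N) / b \<le> 1 + ln N" using b lnN by simp
  have intlog: "((\<lambda>x. c / x) has_integral (c * ln b)) {1..b}" for c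
  proof -
    have "((\<lambda>x. c / x) has_integral (c * ln b - c * ln 1)) {1..b}"
      using b by (intro ftc) (auto intro!: derivative_eq_intros simp: field_simps)
    then show ?thesis by simp
  qed
  have cf1: "continuous_on {1..b} f1" unfolding f1_def using b by (intro continuous_intros) auto
  have if1: "f1 integrable_on {1..b}" using cf1 by (rule integrable_continuous_interval)
  have F1lo: "ln (3 * N / 4) * ln b \<le> integral {1..b} f1"
  proof -
    have "integral {1..b} (\<lambda>x. ln (3 * N / 4) / x) \<le> integral {1..b} f1"
    proof (rule integral_le)
      show "(\<lambda>x. ln (3 * N / 4) / x) integrable_on {1..b}" using intlog by blast
      fix x assume x: "x \<in> {1..b}"
      then have "ln (3 * N / 4) \<le> ln (N - x)" using b N by auto
      then show "ln (3 * N / 4) / x \<le> f1 x" unfolding f1_def using x by (intro divide_right_mono) auto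
    qed (rule if1)
    then show ?thesis using intlog integral_unique by metis
  qed
  have F1hi: "integral {1..b} f1 \<le> ln N * ln b"
  proof -
    have "integral {1..b} f1 \<le> integral {1..b} (\<lambda>x. ln N / x)"
    proof (rule integral_le)
      show "(\<lambda>x. ln N / x) integrable_on {1..b}" using intlog by blast
      fix x assume x: "x \<in> {1..b}"
      then have "ln (N - x) \<le> ln N" using b N by auto
      then show "f1 x \<le> ln N / x" unfolding f1_def using x by (intro divide_right_mono) auto
    qed (rule if1)
    then show ?thesis using intlog integral_unique by metis
  qed
  have dg: "(g has_real_derivative g' x) (at x)" if "x \<in> {1..b}" for x
    unfolding g_def g'_def using that b
    by (auto intro!: derivative_eq_intros simp: field_simps power2_eq_square)
  have cg': "continuous_on {1..b} g'"
    unfolding g'_def using b by (intro continuous_intros) auto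
  have G2: "((\<lambda>x. (1 + ln x) / x^2) has_integral (2 - (2 + ln b) / b)) {1..b}"
  proof -
    have "((\<lambda>x. (1 + ln x) / x^2) has_integral ((- (2 + ln b) / b) - (- (2 + ln 1) / 1))) {1..b}"
      using b by (intro ftc) (auto intro!: derivative_eq_intros simp: field_simps power2_eq_square)
    moreover have "(- (2 + ln b) / b) - (- (2 + ln 1) / 1) = 2 - (2 + ln b) / b"
      by (simp add: minus_divide_left)
    ultimately show ?thesis by metis
  qed
  have gG: "\<bar>g' x\<bar> \<le> (1 + ln x) / x^2" if x: "x \<in> {1..b}" for x
  proof -
    have "ln x \<ge> 0" using x by auto
    then have "\<bar>1 - ln x\<bar> \<le> 1 + ln x" by simp
    then show ?thesis unfolding g'_def by (simp add: divide_right_mono)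
  qed
  have E2: "\<bar>integral {1..b} (\<lambda>x. psi x * g x) - integral {1..b} g / 6\<bar> \<le> \<bar>g 1\<bar> + \<bar>g b\<bar> + (2 - (2 + ln b) / b)"
    using ibp[OF _ dg cg' G2 gG] b by simp
  have gb: "\<bar>g 1\<bar> = 0" "\<bar>g b\<bar> \<le> 1" "2 - (2 + ln b) / b \<le> 2"
  proof -
    show "\<bar>g 1\<bar> = 0" unfolding g_def by simp
    have "ln b \<le> b - 1" using b by (intro ln_le_minus_one) auto
    moreover have "0 \<le> ln b" using b by simp
    ultimately show "\<bar>g b\<bar> \<le> 1" unfolding g_def using b by (simp add: field_simps)
    show "2 - (2 + ln b) / b \<le> 2" using b \<open>0 \<le> ln b\<close> by simp
  qed
  have intg: "integral {1..b} g = (ln b)^2 / 2"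
  proof -
    have "(g has_integral ((ln b)^2 / 2 - (ln 1)^2 / 2)) {1..b}"
      unfolding g_def using b by (intro ftc) (auto intro!: derivative_eq_intros simp: field_simps power2_eq_square)
    then show ?thesis by (simp add: integral_unique)
  qed
  have ci: "((\<lambda>x. 8 * ln N / N) has_integral (8 * ln N / N * b - 8 * ln N / N * 1)) {1..b}"
    using b by (intro const_int) auto
  have cr: "continuous_on {1<..<b} r" unfolding r_def using b by (intro continuous_intros) auto
  have rb: "\<bar>r x\<bar> \<le> 8 * ln N / N" if x: "x \<in> {1<..<b}" for x
  proof -
    have x0: "1 < x" "x < b" using x by auto
    define L where "L = ln (N - x) - ln x"
    have L0: "0 \<le> L" unfolding L_def using x0 b by auto
    have "ln (N - x) \<le> ln N" "0 \<le> ln x" using x0 b by auto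
    then have L1: "L \<le> ln N" unfolding L_def by linarith
    have q1: "0 \<le> 1 / (N - x)" using x0 b by auto
    have q2: "1 / (N - x) \<le> 4 / (N - 2 * x)" using x0 b by (simp add: field_simps)
    have q3: "4 / (N - 2 * x) \<le> 8 / N" using x0 b N unfolding b_def by (simp add: field_simps)
    have "\<bar>4 / (N - 2 * x) - 1 / (N - x)\<bar> \<le> 8 / N" using q1 q2 q3 by (simp only: abs_le_iff) linarith
    then have "\<bar>psi x\<bar> * (\<bar>L\<bar> * \<bar>4 / (N - 2 * x) - 1 / (N - x)\<bar>) \<le> 1 * (ln N * (8 / N))"
      using psi_bound[of x] L0 L1 by (intro mult_mono) auto
    then show ?thesis unfolding r_def L_def[symmetric] by (simp add: abs_mult mult.commute)
  qed
  have R: "r integrable_on {1..b}" "\<bar>integral {1..b} r\<bar> \<le> 2 * ln N"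
  proof -
    show "r integrable_on {1..b}" using dom_int[OF cr ci rb] by blast
    have "8 * ln N / N * b - 8 * ln N / N * 1 \<le> 8 * ln N / N * b" using lnN N by simp
    also have "\<dots> = 2 * ln N" unfolding b_def using N by simp
    finally show "\<bar>integral {1..b} r\<bar> \<le> 2 * ln N" using dom_int[OF cr ci rb] by linarith
  qed
  have i1: "(\<lambda>x. psi x * f1 x) integrable_on {1..b}"
    by (intro integrable_continuous_interval continuous_intros cf1)
  have i2: "(\<lambda>x. psi x * g x) integrable_on {1..b}"
    unfolding g_def using b by (intro integrable_continuous_interval continuous_intros) auto
  have dec: "h2 N x = psi x * f1 x - psi x * g x + r x" if x: "x \<in> {1..b}" for x
  proof -
    have "h2 N x = psi x * (ln (N - x) - ln x) * (1 / x + (4 / (N - 2 * x) - 1 / (N - x)))"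
      unfolding h2_def using x b by (intro hform) auto
    moreover have "p * (a - c) * (1 / y + e) = p * (a / y) - p * (c / y) + p * ((a - c) * e)" for p a c y e :: real
      by (simp add: divide_inverse algebra_simps)
    ultimately show ?thesis unfolding f1_def g_def r_def by simp
  qed
  have HB: "(h2 N has_integral (integral {1..b} (\<lambda>x. psi x * f1 x) - integral {1..b} (\<lambda>x. psi x * g x) + integral {1..b} r)) {1..b}"
  proof (rule has_integral_spike_finite[of "{}"])
    show "((\<lambda>x. psi x * f1 x - psi x * g x + r x) has_integral
      (integral {1..b} (\<lambda>x. psi x * f1 x) - integral {1..b} (\<lambda>x. psi x * g x) + integral {1..b} r)) {1..b}"
      using i1 i2 R(1) by (intro has_integral_add has_integral_diff) (auto simp: has_integral_integral)
  qed (use dec in auto)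
  show "h2 N integrable_on {1..N/4}" using HB b_def by blast
  have II: "integral {1..N/4} (h2 N) = integral {1..b} (\<lambda>x. psi x * f1 x) - integral {1..b} (\<lambda>x. psi x * g x) + integral {1..b} r"
    using HB b_def integral_unique by metis
  show "ln (3 * N / 4) * ln (N / 4) / 6 - (ln (N / 4))^2 / 12 - (5 * ln N + 4) \<le> integral {1..N/4} (h2 N)"
    using II E1 E2 f1b V1 F1lo gb intg R(2) unfolding b_def[symmetric] by linarith
  show "integral {1..N/4} (h2 N) \<le> ln N * ln (N / 4) / 6 - (ln (N / 4))^2 / 12 + (5 * ln N + 4)"
    using II E1 E2 f1b V1 F1hi gb intg R(2) unfolding b_def[symmetric] by linarith
qed


lemma part2_est:
  assumes N: "N \<ge> 8"
  shows "ln (3 * N / 4) * ln (N / 4) / 6 - (ln (N / 4))^2 / 12 - (10 * ln N + 30) \<le> integral {0..N/2} (h2 N)"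
    "integral {0..N/2} (h2 N) \<le> ln N * ln (N / 4) / 6 - (ln (N / 4))^2 / 12 + (10 * ln N + 30)"
proof -
  have lnN: "ln N \<ge> 0" using N by simp
  have "(h2 N has_integral (integral {0..1} (h2 N) + integral {1..N/4} (h2 N))) {0..N/4}"
    by (rule has_integral_combine) (use N p2A(1)[OF N] p2B(1)[OF N] in \<open>auto simp: has_integral_integral\<close>)
  then have "(h2 N has_integral (integral {0..1} (h2 N) + integral {1..N/4} (h2 N) + integral {N/4..N/2} (h2 N))) {0..N/2}"
    by (rule has_integral_combine[rotated 2]) (use N p2C(1)[OF N] in \<open>auto simp: has_integral_integral\<close>)
  then have e: "integral {0..N/2} (h2 N) = integral {0..1} (h2 N) + integral {1..N/4} (h2 N) + integral {N/4..N/2} (h2 N)"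
    by (rule integral_unique)
  show "ln (3 * N / 4) * ln (N / 4) / 6 - (ln (N / 4))^2 / 12 - (10 * ln N + 30) \<le> integral {0..N/2} (h2 N)"
    using e p2A(2)[OF N] p2B(2)[OF N] p2C(2)[OF N] lnN by linarith
  show "integral {0..N/2} (h2 N) \<le> ln N * ln (N / 4) / 6 - (ln (N / 4))^2 / 12 + (10 * ln N + 30)"
    using e p2A(2)[OF N] p2B(3)[OF N] p2C(2)[OF N] lnN by linarith
qed

theorem lemma18:
  shows "((\<lambda>n::nat. (1 / ln (real n)) *
            integral {0..real n / 2} (\<lambda>x. psi x / (x * (1 - x / real n))))
           \<longlonglongrightarrow> 1/6) \<and>
         ((\<lambda>n::nat. (1 / (ln (real n))^2) *
            integral {0..real n / 2}
              (\<lambda>x. psi x * ln (inverse (x / real n) - 1) /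
                    (x * (1 - x / real n) * (1 - 2 * x / real n))))
           \<longlonglongrightarrow> 1/12)"
proof
  show "(\<lambda>n::nat. (1 / ln (real n)) *
            integral {0..real n / 2} (\<lambda>x. psi x / (x * (1 - x / real n))))
           \<longlonglongrightarrow> 1/6"
  proof (rule tendsto_sandwich)
    show "eventually (\<lambda>n::nat. (1 / ln (real n)) * (ln (real n - 1) / 6 - 7) \<le>
        (1 / ln (real n)) * integral {0..real n / 2} (\<lambda>x. psi x / (x * (1 - x / real n)))) sequentially"
      using eventually_ge_at_top[of "4::nat"]
    proof eventually_elim
      case (elim n)
      then have "real n \<ge> 4" by simp
      then show ?case using part1_est[of "real n"] by (intro mult_left_mono) auto
    qed
    show "eventually (\<lambda>n::nat. (1 / ln (real n)) * integral {0..real n / 2} (\<lambda>x. psi x / (x * (1 - x / real n)))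
        \<le> (1 / ln (real n)) * (ln (real n - 1) / 6 + 7)) sequentially"
      using eventually_ge_at_top[of "4::nat"]
    proof eventually_elim
      case (elim n)
      then have "real n \<ge> 4" by simp
      then show ?case using part1_est[of "real n"] by (intro mult_left_mono) auto
    qed
    show "(\<lambda>n::nat. (1 / ln (real n)) * (ln (real n - 1) / 6 - 7)) \<longlonglongrightarrow> 1/6" by real_asymp
    show "(\<lambda>n::nat. (1 / ln (real n)) * (ln (real n - 1) / 6 + 7)) \<longlonglongrightarrow> 1/6" by real_asymp
  qed
  have eq: "(\<lambda>x. psi x * ln (inverse (x / real n) - 1) / (x * (1 - x / real n) * (1 - 2 * x / real n))) = h2 (real n)" for n
    by (simp add: h2_def fun_eq_iff)
  show "(\<lambda>n::nat. (1 / (ln (real n))^2) *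
            integral {0..real n / 2}
              (\<lambda>x. psi x * ln (inverse (x / real n) - 1) /
                    (x * (1 - x / real n) * (1 - 2 * x / real n))))
           \<longlonglongrightarrow> 1/12"
    unfolding eq
  proof (rule tendsto_sandwich)
    show "eventually (\<lambda>n::nat. (1 / (ln (real n))^2) * (ln (3 * real n / 4) * ln (real n / 4) / 6 - (ln (real n / 4))^2 / 12 - (10 * ln (real n) + 30)) \<le>
        (1 / (ln (real n))^2) * integral {0..real n / 2} (h2 (real n))) sequentially"
      using eventually_ge_at_top[of "8::nat"]
    proof eventually_elim
      case (elim n)
      then have "real n \<ge> 8" by simp
      then show ?case using part2_est(1)[of "real n"] by (intro mult_left_mono) auto
    qed
    show "eventually (\<lambda>n::nat. (1 / (ln (real n))^2) * integral {0..real n / 2} (h2 (real n)) \<le>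
        (1 / (ln (real n))^2) * (ln (real n) * ln (real n / 4) / 6 - (ln (real n / 4))^2 / 12 + (10 * ln (real n) + 30))) sequentially"
      using eventually_ge_at_top[of "8::nat"]
    proof eventually_elim
      case (elim n)
      then have "real n \<ge> 8" by simp
      then show ?case using part2_est(2)[of "real n"] by (intro mult_left_mono) auto
    qed
    show "(\<lambda>n::nat. (1 / (ln (real n))^2) * (ln (3 * real n / 4) * ln (real n / 4) / 6 - (ln (real n / 4))^2 / 12 - (10 * ln (real n) + 30))) \<longlonglongrightarrow> 1/12"
      by real_asymp
    show "(\<lambda>n::nat. (1 / (ln (real n))^2) * (ln (real n) * ln (real n / 4) / 6 - (ln (real n / 4))^2 / 12 + (10 * ln (real n) + 30))) \<longlonglongrightarrow> 1/12"
      by real_asymp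
  qed
qed

end
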